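(* Let $U$, $x_i$, $x_{i+1/2}$, $h$, $\tilde h_R,\tilde h_L$ be as in the context, let $W_i:=\min_{j=1,\dots,k}(\tilde h_R(x_i;x_{j+1})+\tilde h_L(x_i;x_j))$ and $W(x)=\min_{j=1,\dots,k}\{W_j+h(x;x_j)\}$. Then for all $x\in\mathbb{S}^1$, $$W(x)=\min_{i=1,\dots,k}\min\{W_i+h(x;x_i),\ W(x_{i+1/2})+h(x;x_{i+1/2})\}.$$
   Context: $\mathbb{S}^1=\mathbb{R}/\mathbb{Z}$; $U:\mathbb{R}\to\mathbb{R}$ smooth, skew periodic ($U(x)=\tilde U(x)-\bar bx$, $\tilde U$ smooth 1-periodic), whose critical points in one period are exactly $k\ge1$ local minima $x_1,\dots,x_k$ interleaved with $k$ local maxima, $0=x_{1/2}<x_1<x_{3/2}<\dots<x_k<x_{k+1/2}=1$, $x_{i+\ell k}=x_i+\ell$. $L(s,x)=\frac14(s+U'(x))^2$. Peierls barrier from any $z\in\mathbb{S}^1$: $h(y;z)=\liminf_{T\to\infty}\inf\{\int_0^TL(\dot\gamma,\gamma)dt:\gamma:[0,T]\to\mathbb{S}^1$ absolutely continuous, $\gamma(0)=z,\gamma(T)=y\}$. Right barrier: for $y\in[x_i,x_{i+k}]$, $h_R(y;x_i)=\inf\{\int_0^TL(\dot\gamma,\gamma)dt:T\ge0,\gamma:[0,T]\to\mathbb{R}$ absolutely continuous, $\gamma(0)=x_i,\gamma(T)=y\}$; left barrier $h_L(y;x_i)$, $y\in[x_{i-k},x_i]$, same formula. For $i,j\in\{1,\dots,k\}$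 ($x_{k+1}=x_1+1$): $\tilde h_R(x_i;x_{j+1})=h_R(x_i;x_{j+1})$ if $j<i$, $=h_R(x_{i+k};x_{j+1})$ if $j\ge i$; $\tilde h_L(x_i;x_j)=h_L(x_i;x_j)$ if $j\ge i$, $=h_L(x_{i-k};x_j)$ if $j<i$. *)

theory Defs
  imports "HOL-Analysis.Analysis"
begin

definition smooth_fun :: "(real \<Rightarrow> real) \<Rightarrow> bool" where
  "smooth_fun f \<longleftrightarrow> (\<forall>n x. ((deriv ^^ n) f) differentiable (at x))"

definition abs_cont_on :: "real \<Rightarrow> real \<Rightarrow> (real \<Rightarrow> real) \<Rightarrow> bool" where
  "abs_cont_on a b f \<longleftrightarrow>
     (\<forall>\<epsilon>>0. \<exists>\<delta>>0. \<forall>(n::nat) (u::nat \<Rightarrow> real) v.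
        (\<forall>i<n. a \<le> u i \<and> u i \<le> v i \<and> v i \<le> b) \<and>
        (\<forall>i<n. \<forall>j<n. i \<noteq> j \<longrightarrow> v i \<le> u j \<or> v j \<le> u i) \<and>
        (\<Sum>i<n. v i - u i) < \<delta>
        \<longrightarrow> (\<Sum>i<n. \<bar>f (v i) - f (u i)\<bar>) < \<epsilon>)"

definition lagr :: "(real \<Rightarrow> real) \<Rightarrow> real \<Rightarrow> real \<Rightarrow> real" where
  "lagr U s x = (s + deriv U x)\<^sup>2 / 4"

text \<open>Action of a (lifted) curve gamma on [0,T]; the integrand is nonnegative, so we use the
  nonnegative Lebesgue integral (values in ennreal).  The derivative of an absolutely continuous
  curve exists almost everywhere; elsewhere the value of vector_derivative is irrelevant.\<close>
definition action :: "(real \<Rightarrow> real) \<Rightarrow> real \<Rightarrow> (real \<Rightarrow> real) \<Rightarrow> ennreal" where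
  "action U T \<gamma> = (\<integral>\<^sup>+ t \<in> {0..T}. ennreal (lagr U (vector_derivative \<gamma> (at t)) (\<gamma> t)) \<partial>lborel)"

text \<open>Peierls barrier h(y;z) on the circle R/Z, computed with lifts to R: a curve on S^1 from
  z to y corresponds to a lifted curve in R from z ending in y + Z.\<close>
definition peierls :: "(real \<Rightarrow> real) \<Rightarrow> real \<Rightarrow> real \<Rightarrow> ennreal" where
  "peierls U y z = Liminf at_top (\<lambda>T::real.
      INF \<gamma> \<in> {\<gamma>. abs_cont_on 0 T \<gamma> \<and> \<gamma> 0 = z \<and> \<gamma> T - y \<in> \<int>}. action U T \<gamma>)"

text \<open>Both the right barrier h_R and the left barrier h_L are given by this same formula
  (they differ only in the range of y where they are used).\<close>
definition line_barrier :: "(real \<Rightarrow> real) \<Rightarrow> real \<Rightarrow> real \<Rightarrow> ennreal" where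
  "line_barrier U y z = (INF (T, \<gamma>) \<in> {(T, \<gamma>). T \<ge> 0 \<and> abs_cont_on 0 T \<gamma> \<and> \<gamma> 0 = z \<and> \<gamma> T = y}.
      action U T \<gamma>)"

definition hR :: "(real \<Rightarrow> real) \<Rightarrow> real \<Rightarrow> real \<Rightarrow> ennreal" where
  "hR U y z = line_barrier U y z"

definition hL :: "(real \<Rightarrow> real) \<Rightarrow> real \<Rightarrow> real \<Rightarrow> ennreal" where
  "hL U y z = line_barrier U y z"

text \<open>xm i = x_i (minima), extended to all integers by x_{i+lk} = x_i + l.\<close>
definition tilde_hR :: "(real \<Rightarrow> real) \<Rightarrow> (int \<Rightarrow> real) \<Rightarrow> nat \<Rightarrow> int \<Rightarrow> int \<Rightarrow> ennreal" where
  "tilde_hR U xm k i j =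
     (if j < i then hR U (xm i) (xm (j + 1)) else hR U (xm (i + int k)) (xm (j + 1)))"

definition tilde_hL :: "(real \<Rightarrow> real) \<Rightarrow> (int \<Rightarrow> real) \<Rightarrow> nat \<Rightarrow> int \<Rightarrow> int \<Rightarrow> ennreal" where
  "tilde_hL U xm k i j =
     (if j \<ge> i then hL U (xm i) (xm j) else hL U (xm (i - int k)) (xm j))"

definition Wmin :: "(real \<Rightarrow> real) \<Rightarrow> (int \<Rightarrow> real) \<Rightarrow> nat \<Rightarrow> int \<Rightarrow> ennreal" where
  "Wmin U xm k i = Min ((\<lambda>j. tilde_hR U xm k i j + tilde_hL U xm k i j) ` {1..int k})"

definition Wfun :: "(real \<Rightarrow> real) \<Rightarrow> (int \<Rightarrow> real) \<Rightarrow> nat \<Rightarrow> real \<Rightarrow> ennreal" where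
  "Wfun U xm k x = Min ((\<lambda>j. Wmin U xm k j + peierls U x (xm j)) ` {1..int k})"

definition is_local_min :: "(real \<Rightarrow> real) \<Rightarrow> real \<Rightarrow> bool" where
  "is_local_min f x \<longleftrightarrow> (\<exists>e>0. \<forall>y. \<bar>y - x\<bar> < e \<longrightarrow> f x \<le> f y)"

definition is_local_max :: "(real \<Rightarrow> real) \<Rightarrow> real \<Rightarrow> bool" where
  "is_local_max f x \<longleftrightarrow> (\<exists>e>0. \<forall>y. \<bar>y - x\<bar> < e \<longrightarrow> f y \<le> f x)"

end

theory Submission
  imports Defs
begin


lemma vd_shift:
  fixes g :: "real \<Rightarrow> real"
  shows "vector_derivative (\<lambda>t. g (t - c) + d) (at t) = vector_derivative g (at (t - c))"
proof -
  have "\<And>D. ((\<lambda>t. g (t - c) + d) has_vector_derivative D) (at t) \<longleftrightarrow> (g has_vector_derivative D) (at (t - c))"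
  proof -
    fix D
    have "((\<lambda>t. g (t - c) + d) has_vector_derivative D) (at t) \<longleftrightarrow> ((\<lambda>t. g (t - c)) has_vector_derivative D) (at t)"
      by (rule has_vector_derivative_add_const)
    also have "\<dots> \<longleftrightarrow> ((\<lambda>t. g (t + - c)) has_real_derivative D) (at t)"
      by (simp add: has_real_derivative_iff_has_vector_derivative)
    also have "\<dots> \<longleftrightarrow> (g has_real_derivative D) (at (t + - c))"
      by (rule DERIV_shift[symmetric])
    also have "\<dots> \<longleftrightarrow> (g has_vector_derivative D) (at (t - c))"
      by (simp add: has_real_derivative_iff_has_vector_derivative)
    finally show "?thesis D" .
  qed
  then show ?thesis unfolding vector_derivative_def by simp
qed

lemma deriv_shift_per:
  fixes U :: "real \<Rightarrow> real"
  assumes "\<And>y. U (y + c) = U y + e"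
  shows "deriv U (x + c) = deriv U x"
proof -
  have "\<And>D. (U has_real_derivative D) (at (x + c)) \<longleftrightarrow> (U has_real_derivative D) (at x)"
  proof -
    fix D
    have "(U has_real_derivative D) (at (x + c)) \<longleftrightarrow> ((\<lambda>y. U (y + c)) has_real_derivative D) (at x)"
      by (rule DERIV_shift)
    also have "\<dots> \<longleftrightarrow> ((\<lambda>y. U y + e) has_real_derivative D) (at x)"
      using assms by simp
    also have "\<dots> \<longleftrightarrow> (U has_real_derivative D) (at x)"
      by (simp add: has_real_derivative_iff_has_vector_derivative has_vector_derivative_add_const)
    finally show "?thesis D" .
  qed
  then show ?thesis unfolding deriv_def by simp
qed

lemma INF_sum_ge:
  fixes f g :: "'a \<Rightarrow> ennreal"
  assumes "\<And>a b. a \<in> A \<Longrightarrow> b \<in> B \<Longrightarrow> c \<le> f a + g b"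
  shows "c \<le> (INF a\<in>A. f a) + (INF b\<in>B. g b)"
proof (cases "A = {} \<or> B = {}")
  case True then show ?thesis by auto
next
  case False
  have ie: "(INF a\<in>A. f a) + y = (INF a\<in>A. f a + y)" for y :: ennreal
    using continuous_at_Inf_mono[of "\<lambda>x. x + y" "f`A"] False
    using continuous_add[of "at_right (Inf (f`A))", of "\<lambda>x. x" "\<lambda>x. y"]
    by (auto simp: mono_def image_comp)
  have ie2: "x + (INF b\<in>B. g b) = (INF b\<in>B. x + g b)" for x :: ennreal
    using continuous_at_Inf_mono[of "\<lambda>y. x + y" "g`B"] False
    using continuous_add[of "at_right (Inf (g`B))", of "\<lambda>y. x" "\<lambda>y. y"]
    by (auto simp: mono_def image_comp)
  show ?thesis unfolding ie ie2 using assms by (auto intro!: INF_greatest)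
qed



lemma ac_cong:
  assumes "abs_cont_on a b f" "\<And>t. a \<le> t \<Longrightarrow> t \<le> b \<Longrightarrow> f t = g t"
  shows "abs_cont_on a b g"
  unfolding abs_cont_on_def
proof (intro allI impI)
  fix \<epsilon> :: real assume "\<epsilon> > 0"
  then obtain \<delta> where d: "\<delta> > 0" and H: "\<forall>(n::nat) (u::nat \<Rightarrow> real) v.
        (\<forall>i<n. a \<le> u i \<and> u i \<le> v i \<and> v i \<le> b) \<and>
        (\<forall>i<n. \<forall>j<n. i \<noteq> j \<longrightarrow> v i \<le> u j \<or> v j \<le> u i) \<and>
        (\<Sum>i<n. v i - u i) < \<delta>
        \<longrightarrow> (\<Sum>i<n. \<bar>f (v i) - f (u i)\<bar>) < \<epsilon>"
    using assms(1) unfolding abs_cont_on_def by blast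
  show "\<exists>\<delta>>0. \<forall>(n::nat) (u::nat \<Rightarrow> real) v.
        (\<forall>i<n. a \<le> u i \<and> u i \<le> v i \<and> v i \<le> b) \<and>
        (\<forall>i<n. \<forall>j<n. i \<noteq> j \<longrightarrow> v i \<le> u j \<or> v j \<le> u i) \<and>
        (\<Sum>i<n. v i - u i) < \<delta>
        \<longrightarrow> (\<Sum>i<n. \<bar>g (v i) - g (u i)\<bar>) < \<epsilon>"
  proof (intro exI[of _ \<delta>] conjI allI impI d)
    fix n :: nat and u v :: "nat \<Rightarrow> real"
    assume A: "(\<forall>i<n. a \<le> u i \<and> u i \<le> v i \<and> v i \<le> b) \<and>
        (\<forall>i<n. \<forall>j<n. i \<noteq> j \<longrightarrow> v i \<le> u j \<or> v j \<le> u i) \<and>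
        (\<Sum>i<n. v i - u i) < \<delta>"
    have "(\<Sum>i<n. \<bar>g (v i) - g (u i)\<bar>) = (\<Sum>i<n. \<bar>f (v i) - f (u i)\<bar>)"
      using A assms(2) by (intro sum.cong) auto
    also have "\<dots> < \<epsilon>" using H A by blast
    finally show "(\<Sum>i<n. \<bar>g (v i) - g (u i)\<bar>) < \<epsilon>" .
  qed
qed

lemma ac_shift:
  assumes "abs_cont_on a b f"
  shows "abs_cont_on (a + c) (b + c) (\<lambda>t. f (t - c) + d)"
  unfolding abs_cont_on_def
proof (intro allI impI)
  fix \<epsilon> :: real assume "\<epsilon> > 0"
  then obtain \<delta> where d: "\<delta> > 0" and H: "\<forall>(n::nat) (u::nat \<Rightarrow> real) v.
        (\<forall>i<n. a \<le> u i \<and> u i \<le> v i \<and> v i \<le> b) \<and>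
        (\<forall>i<n. \<forall>j<n. i \<noteq> j \<longrightarrow> v i \<le> u j \<or> v j \<le> u i) \<and>
        (\<Sum>i<n. v i - u i) < \<delta>
        \<longrightarrow> (\<Sum>i<n. \<bar>f (v i) - f (u i)\<bar>) < \<epsilon>"
    using assms(1) unfolding abs_cont_on_def by blast
  show "\<exists>\<delta>>0. \<forall>(n::nat) (u::nat \<Rightarrow> real) v.
        (\<forall>i<n. a + c \<le> u i \<and> u i \<le> v i \<and> v i \<le> b + c) \<and>
        (\<forall>i<n. \<forall>j<n. i \<noteq> j \<longrightarrow> v i \<le> u j \<or> v j \<le> u i) \<and>
        (\<Sum>i<n. v i - u i) < \<delta>
        \<longrightarrow> (\<Sum>i<n. \<bar>(f (v i - c) + d) - (f (u i - c) + d)\<bar>) < \<epsilon>"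
  proof (intro exI[of _ \<delta>] conjI allI impI d)
    fix n :: nat and u v :: "nat \<Rightarrow> real"
    assume A: "(\<forall>i<n. a + c \<le> u i \<and> u i \<le> v i \<and> v i \<le> b + c) \<and>
        (\<forall>i<n. \<forall>j<n. i \<noteq> j \<longrightarrow> v i \<le> u j \<or> v j \<le> u i) \<and>
        (\<Sum>i<n. v i - u i) < \<delta>"
    define u' where "u' i = u i - c" for i
    define v' where "v' i = v i - c" for i
    have "(\<forall>i<n. a \<le> u' i \<and> u' i \<le> v' i \<and> v' i \<le> b) \<and>
        (\<forall>i<n. \<forall>j<n. i \<noteq> j \<longrightarrow> v' i \<le> u' j \<or> v' j \<le> u' i) \<and>
        (\<Sum>i<n. v' i - u' i) < \<delta>"
      using A unfolding u'_def v'_def by auto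
    then have "(\<Sum>i<n. \<bar>f (v' i) - f (u' i)\<bar>) < \<epsilon>" using H by blast
    then show "(\<Sum>i<n. \<bar>(f (v i - c) + d) - (f (u i - c) + d)\<bar>) < \<epsilon>"
      unfolding u'_def v'_def by simp
  qed
qed

lemma ac_concat:
  assumes "abs_cont_on a b f" "abs_cont_on b c f" "a \<le> b" "b \<le> c"
  shows "abs_cont_on a c f"
  unfolding abs_cont_on_def
proof (intro allI impI)
  fix \<epsilon> :: real assume "\<epsilon> > 0"
  then have e2: "\<epsilon>/2 > 0" by simp
  obtain \<delta>1 where d1: "\<delta>1 > 0" and H1: "\<forall>(n::nat) (u::nat \<Rightarrow> real) v.
        (\<forall>i<n. a \<le> u i \<and> u i \<le> v i \<and> v i \<le> b) \<and>
        (\<forall>i<n. \<forall>j<n. i \<noteq> j \<longrightarrow> v i \<le> u j \<or> v j \<le> u i) \<and>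
        (\<Sum>i<n. v i - u i) < \<delta>1
        \<longrightarrow> (\<Sum>i<n. \<bar>f (v i) - f (u i)\<bar>) < \<epsilon>/2"
    using assms(1) e2 unfolding abs_cont_on_def by blast
  obtain \<delta>2 where d2: "\<delta>2 > 0" and H2: "\<forall>(n::nat) (u::nat \<Rightarrow> real) v.
        (\<forall>i<n. b \<le> u i \<and> u i \<le> v i \<and> v i \<le> c) \<and>
        (\<forall>i<n. \<forall>j<n. i \<noteq> j \<longrightarrow> v i \<le> u j \<or> v j \<le> u i) \<and>
        (\<Sum>i<n. v i - u i) < \<delta>2
        \<longrightarrow> (\<Sum>i<n. \<bar>f (v i) - f (u i)\<bar>) < \<epsilon>/2"
    using assms(2) e2 unfolding abs_cont_on_def by blast
  show "\<exists>\<delta>>0. \<forall>(n::nat) (u::nat \<Rightarrow> real) v.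
        (\<forall>i<n. a \<le> u i \<and> u i \<le> v i \<and> v i \<le> c) \<and>
        (\<forall>i<n. \<forall>j<n. i \<noteq> j \<longrightarrow> v i \<le> u j \<or> v j \<le> u i) \<and>
        (\<Sum>i<n. v i - u i) < \<delta>
        \<longrightarrow> (\<Sum>i<n. \<bar>f (v i) - f (u i)\<bar>) < \<epsilon>"
  proof (intro exI[of _ "min \<delta>1 \<delta>2"] conjI allI impI)
    show "min \<delta>1 \<delta>2 > 0" using d1 d2 by simp
    fix n :: nat and u v :: "nat \<Rightarrow> real"
    assume A: "(\<forall>i<n. a \<le> u i \<and> u i \<le> v i \<and> v i \<le> c) \<and>
        (\<forall>i<n. \<forall>j<n. i \<noteq> j \<longrightarrow> v i \<le> u j \<or> v j \<le> u i) \<and>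
        (\<Sum>i<n. v i - u i) < min \<delta>1 \<delta>2"
    define u1 where "u1 i = min (u i) b" for i
    define v1 where "v1 i = min (v i) b" for i
    define u2 where "u2 i = max (u i) b" for i
    define v2 where "v2 i = max (v i) b" for i
    have L1: "(\<Sum>i<n. v1 i - u1 i) \<le> (\<Sum>i<n. v i - u i)"
      using A unfolding u1_def v1_def by (intro sum_mono) auto
    have L2: "(\<Sum>i<n. v2 i - u2 i) \<le> (\<Sum>i<n. v i - u i)"
      using A unfolding u2_def v2_def by (intro sum_mono) auto
    have "(\<forall>i<n. a \<le> u1 i \<and> u1 i \<le> v1 i \<and> v1 i \<le> b) \<and>
        (\<forall>i<n. \<forall>j<n. i \<noteq> j \<longrightarrow> v1 i \<le> u1 j \<or> v1 j \<le> u1 i) \<and>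
        (\<Sum>i<n. v1 i - u1 i) < \<delta>1"
      using A L1 assms(3,4) unfolding u1_def v1_def by (auto simp: min_def) (smt (verit))+
    then have S1: "(\<Sum>i<n. \<bar>f (v1 i) - f (u1 i)\<bar>) < \<epsilon>/2" using H1 by blast
    have "(\<forall>i<n. b \<le> u2 i \<and> u2 i \<le> v2 i \<and> v2 i \<le> c) \<and>
        (\<forall>i<n. \<forall>j<n. i \<noteq> j \<longrightarrow> v2 i \<le> u2 j \<or> v2 j \<le> u2 i) \<and>
        (\<Sum>i<n. v2 i - u2 i) < \<delta>2"
      using A L2 assms(3,4) unfolding u2_def v2_def by (auto simp: max_def) (smt (verit))+
    then have S2: "(\<Sum>i<n. \<bar>f (v2 i) - f (u2 i)\<bar>) < \<epsilon>/2" using H2 by blast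
    have "(\<Sum>i<n. \<bar>f (v i) - f (u i)\<bar>) \<le> (\<Sum>i<n. \<bar>f (v1 i) - f (u1 i)\<bar> + \<bar>f (v2 i) - f (u2 i)\<bar>)"
    proof (intro sum_mono)
      fix i assume "i \<in> {..<n}"
      then have "u i \<le> v i" using A by auto
      then show "\<bar>f (v i) - f (u i)\<bar> \<le> \<bar>f (v1 i) - f (u1 i)\<bar> + \<bar>f (v2 i) - f (u2 i)\<bar>"
        unfolding u1_def v1_def u2_def v2_def
        by (cases "v i \<le> b"; cases "u i \<le> b") (auto simp: min_def max_def)
    qed
    also have "\<dots> < \<epsilon>" using S1 S2 by (simp add: sum.distrib)
    finally show "(\<Sum>i<n. \<bar>f (v i) - f (u i)\<bar>) < \<epsilon>" .
  qed
qed



lemma nn_bridge: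
  assumes "\<And>g. g \<in> borel_measurable M \<Longrightarrow> (\<And>x. g x \<le> f x) \<Longrightarrow> integral\<^sup>N M g \<le> X"
  shows "integral\<^sup>N M f \<le> X"
  unfolding nn_integral_def[of M f]
proof (rule SUP_least)
  fix g assume "g \<in> {g. simple_function M g \<and> g \<le> f}"
  then have g: "simple_function M g" "g \<le> f" by auto
  have "integral\<^sup>S M g = integral\<^sup>N M g" using nn_integral_eq_simple_integral[OF g(1)] by simp
  also have "\<dots> \<le> X" using assms[of g] g borel_measurable_simple_function[OF g(1)]
    by (auto simp: le_fun_def)
  finally show "integral\<^sup>S M g \<le> X" .
qed

lemma action_concat:
  fixes \<gamma>1 \<gamma>2 :: "real \<Rightarrow> real"
  assumes T1: "T1 \<ge> 0" and T2: "T2 \<ge> 0" and dper: "\<And>x. deriv U (x + n) = deriv U x"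
  shows "action U (T1+T2) (\<lambda>t. if t \<le> T1 then \<gamma>1 t else \<gamma>2 (t - T1) + n)
     \<le> action U T1 \<gamma>1 + action U T2 \<gamma>2"
proof -
  define \<gamma> where "\<gamma> = (\<lambda>t. if t \<le> T1 then \<gamma>1 t else \<gamma>2 (t - T1) + n)"
  define I1 where "I1 = {0<..<T1}"
  define I2 where "I2 = {T1<..<T1+T2}"
  have "action U (T1+T2) \<gamma> \<le> action U T1 \<gamma>1 + action U T2 \<gamma>2"
    unfolding action_def[of U "T1+T2" \<gamma>]
  proof (rule nn_bridge)
    fix g :: "real \<Rightarrow> ennreal"
    assume gm: "g \<in> borel_measurable lborel"
      and gle: "\<And>t. g t \<le> ennreal (lagr U (vector_derivative \<gamma> (at t)) (\<gamma> t)) * indicator {0..T1+T2} t"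
    have gm': "g \<in> borel_measurable borel" using gm by simp
    have AE: "AE t in lborel. g t \<le> g t * indicator I1 t + g t * indicator I2 t"
      using AE_lborel_singleton[of 0] AE_lborel_singleton[of T1] AE_lborel_singleton[of "T1+T2"]
    proof (eventually_elim)
      case (elim t)
      show ?case
      proof (cases "t \<in> {0..T1+T2}")
        case True
        with elim have "t \<in> I1 \<or> t \<in> I2" unfolding I1_def I2_def by auto
        then show ?thesis unfolding I1_def I2_def by (auto simp: indicator_def)
      next
        case False
        then have "g t = 0" using gle[of t] by simp
        then show ?thesis by simp
      qed
    qed
    have i0: "integral\<^sup>N lborel g \<le> (\<integral>\<^sup>+ t. g t * indicator I1 t + g t * indicator I2 t \<partial>lborel)"
      by (rule nn_integral_mono_AE[OF AE])
    have i1: "(\<integral>\<^sup>+ t. g t * indicator I1 t + g t * indicator I2 t \<partial>lborel) = (\<integral>\<^sup>+ t. g t * indicator I1 t \<partial>lborel) + (\<integral>\<^sup>+ t. g t * indicator I2 t \<partial>lborel)"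
      using gm by (intro nn_integral_add) (auto simp: I1_def I2_def)
    have i2: "(\<integral>\<^sup>+ t. g t * indicator I1 t \<partial>lborel) \<le> action U T1 \<gamma>1"
      unfolding action_def
    proof (rule nn_integral_mono)
      fix t
      show "g t * indicator I1 t \<le> ennreal (lagr U (vector_derivative \<gamma>1 (at t)) (\<gamma>1 t)) * indicator {0..T1} t"
      proof (cases "t \<in> I1")
        case True
        then have tt: "0 < t" "t < T1" unfolding I1_def by auto
        have "vector_derivative \<gamma> (at t) = vector_derivative \<gamma>1 (at t)"
        proof (rule vector_derivative_cong_eq[where A=UNIV])
          show "eventually (\<lambda>x. x \<in> UNIV \<longrightarrow> \<gamma> x = \<gamma>1 x) (nhds t)"
            unfolding eventually_nhds
            by (intro exI[of _ "{..<T1}"]) (auto simp: \<gamma>_def tt)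
        qed auto
        moreover have "\<gamma> t = \<gamma>1 t" using tt by (simp add: \<gamma>_def)
        ultimately show ?thesis using gle[of t] True tt T1 T2 by (simp add: indicator_def)
      next
        case False then show ?thesis by simp
      qed
    qed
    have "(\<integral>\<^sup>+ t. g t * indicator I2 t \<partial>lborel) = (\<integral>\<^sup>+ s. g (T1 + s) * indicator I2 (T1 + s) \<partial>lborel)"
      using nn_integral_real_affine[of "\<lambda>t. g t * indicator I2 t" 1 T1] gm' by (simp add: I2_def)
    also have "\<dots> \<le> action U T2 \<gamma>2"
      unfolding action_def
    proof (rule nn_integral_mono)
      fix s
      show "g (T1 + s) * indicator I2 (T1 + s) \<le> ennreal (lagr U (vector_derivative \<gamma>2 (at s)) (\<gamma>2 s)) * indicator {0..T2} s"
      proof (cases "T1 + s \<in> I2")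
        case True
        then have ss: "0 < s" "s < T2" unfolding I2_def by auto
        have "vector_derivative \<gamma> (at (T1 + s)) = vector_derivative (\<lambda>t. \<gamma>2 (t - T1) + n) (at (T1 + s))"
        proof (rule vector_derivative_cong_eq[where A=UNIV])
          show "eventually (\<lambda>x. x \<in> UNIV \<longrightarrow> \<gamma> x = \<gamma>2 (x - T1) + n) (nhds (T1 + s))"
            unfolding eventually_nhds
            by (intro exI[of _ "{T1<..}"]) (auto simp: \<gamma>_def ss)
        qed auto
        also have "\<dots> = vector_derivative \<gamma>2 (at s)" by (simp add: vd_shift)
        finally have vd: "vector_derivative \<gamma> (at (T1 + s)) = vector_derivative \<gamma>2 (at s)" .
        have gv: "\<gamma> (T1 + s) = \<gamma>2 s + n" using ss by (simp add: \<gamma>_def)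
        have "lagr U (vector_derivative \<gamma> (at (T1 + s))) (\<gamma> (T1 + s)) = lagr U (vector_derivative \<gamma>2 (at s)) (\<gamma>2 s)"
          by (simp only: vd gv lagr_def dper)
        then show ?thesis using gle[of "T1 + s"] True ss T1 T2 by (simp add: indicator_def)
      next
        case False then show ?thesis by simp
      qed
    qed
    finally have i3: "(\<integral>\<^sup>+ t. g t * indicator I2 t \<partial>lborel) \<le> action U T2 \<gamma>2" .
    show "integral\<^sup>N lborel g \<le> action U T1 \<gamma>1 + action U T2 \<gamma>2"
      using i0 i1 add_mono[OF i2 i3] by simp
  qed
  then show ?thesis unfolding \<gamma>_def .
qed



lemma A_tri:
  fixes U :: "real \<Rightarrow> real"
  assumes T1: "T1 \<ge> 0" and T2: "T2 \<ge> 0"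
    and dper: "\<And>(m::int) x. deriv U (x + of_int m) = deriv U x"
  shows "(INF \<gamma> \<in> {\<gamma>. abs_cont_on 0 (T1+T2) \<gamma> \<and> \<gamma> 0 = z \<and> \<gamma> (T1+T2) - x \<in> \<int>}. action U (T1+T2) \<gamma>)
    \<le> (INF \<gamma> \<in> {\<gamma>. abs_cont_on 0 T1 \<gamma> \<and> \<gamma> 0 = z \<and> \<gamma> T1 - y \<in> \<int>}. action U T1 \<gamma>)
     + (INF \<gamma> \<in> {\<gamma>. abs_cont_on 0 T2 \<gamma> \<and> \<gamma> 0 = y \<and> \<gamma> T2 - x \<in> \<int>}. action U T2 \<gamma>)"
proof (rule INF_sum_ge)
  fix \<gamma>1 \<gamma>2
  assume g1: "\<gamma>1 \<in> {\<gamma>. abs_cont_on 0 T1 \<gamma> \<and> \<gamma> 0 = z \<and> \<gamma> T1 - y \<in> \<int>}"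
    and g2: "\<gamma>2 \<in> {\<gamma>. abs_cont_on 0 T2 \<gamma> \<and> \<gamma> 0 = y \<and> \<gamma> T2 - x \<in> \<int>}"
  from g1 have a1: "abs_cont_on 0 T1 \<gamma>1" and z1: "\<gamma>1 0 = z" and e1: "\<gamma>1 T1 - y \<in> \<int>" by auto
  from g2 have a2: "abs_cont_on 0 T2 \<gamma>2" and z2: "\<gamma>2 0 = y" and e2: "\<gamma>2 T2 - x \<in> \<int>" by auto
  from e1 obtain m where m: "\<gamma>1 T1 - y = of_int m" by (auto elim: Ints_cases)
  define n where "n = (of_int m :: real)"
  have g1T: "\<gamma>1 T1 = \<gamma>2 0 + n" using m z2 unfolding n_def by linarith
  define \<gamma> where "\<gamma> = (\<lambda>t. if t \<le> T1 then \<gamma>1 t else \<gamma>2 (t - T1) + n)"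
  have ac1: "abs_cont_on 0 T1 \<gamma>"
    using a1 by (rule ac_cong) (simp add: \<gamma>_def)
  have "abs_cont_on (0 + T1) (T2 + T1) (\<lambda>t. \<gamma>2 (t - T1) + n)"
    using a2 by (rule ac_shift)
  then have "abs_cont_on T1 (T1 + T2) (\<lambda>t. \<gamma>2 (t - T1) + n)" by (simp add: add.commute)
  then have ac2: "abs_cont_on T1 (T1 + T2) \<gamma>"
  proof (rule ac_cong)
    fix t assume t: "T1 \<le> t" "t \<le> T1 + T2"
    show "\<gamma>2 (t - T1) + n = \<gamma> t"
    proof (cases "t \<le> T1")
      case True
      then have "t = T1" using t by simp
      then show ?thesis using g1T by (simp add: \<gamma>_def)
    next
      case False
      then show ?thesis by (simp add: \<gamma>_def)
    qed
  qed
  have gT: "\<gamma> (T1+T2) = \<gamma>2 T2 + n"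
  proof (cases "T2 = 0")
    case True
    then show ?thesis using g1T by (simp add: \<gamma>_def)
  next
    case False
    then have "\<not> T1 + T2 \<le> T1" using T2 by simp
    then show ?thesis by (simp add: \<gamma>_def)
  qed
  have dn: "\<And>x. deriv U (x + n) = deriv U x" unfolding n_def by (rule dper)
  have nI: "n \<in> \<int>" unfolding n_def by simp
  have mem: "\<gamma> \<in> {\<gamma>. abs_cont_on 0 (T1+T2) \<gamma> \<and> \<gamma> 0 = z \<and> \<gamma> (T1+T2) - x \<in> \<int>}"
  proof (intro CollectI conjI)
    show "abs_cont_on 0 (T1+T2) \<gamma>" using ac_concat[OF ac1 ac2] T1 T2 by simp
    show "\<gamma> 0 = z" using z1 T1 by (simp add: \<gamma>_def)
    have "\<gamma> (T1+T2) - x = (\<gamma>2 T2 - x) + n" using gT by simp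
    then show "\<gamma> (T1+T2) - x \<in> \<int>" using e2 nI by (metis Ints_add)
  qed
  have "(INF \<gamma> \<in> {\<gamma>. abs_cont_on 0 (T1+T2) \<gamma> \<and> \<gamma> 0 = z \<and> \<gamma> (T1+T2) - x \<in> \<int>}. action U (T1+T2) \<gamma>)
      \<le> action U (T1+T2) \<gamma>" using mem by (rule INF_lower)
  also have "\<dots> \<le> action U T1 \<gamma>1 + action U T2 \<gamma>2"
    unfolding \<gamma>_def using action_concat[OF T1 T2 dn] .
  finally show "(INF \<gamma> \<in> {\<gamma>. abs_cont_on 0 (T1+T2) \<gamma> \<and> \<gamma> 0 = z \<and> \<gamma> (T1+T2) - x \<in> \<int>}. action U (T1+T2) \<gamma>)
      \<le> action U T1 \<gamma>1 + action U T2 \<gamma>2" .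
qed



lemma INF_le_Liminf:
  fixes g :: "real \<Rightarrow> ennreal"
  shows "(INF s\<in>{s. c \<le> s}. g s) \<le> Liminf at_top g"
  unfolding Liminf_def
proof (rule SUP_upper2[of "\<lambda>s. c \<le> s"])
  show "(\<lambda>s. c \<le> s) \<in> {P. eventually P at_top}" using eventually_ge_at_top[of c] by simp
qed simp

lemma liminf_tri:
  fixes f g h :: "real \<Rightarrow> ennreal"
  assumes H: "\<And>s t. s \<ge> 0 \<Longrightarrow> t \<ge> 0 \<Longrightarrow> f (s + t) \<le> g s + h t"
  shows "Liminf at_top f \<le> Liminf at_top g + Liminf at_top h"
  unfolding Liminf_def[of at_top f]
proof (rule SUP_least)
  fix P :: "real \<Rightarrow> bool" assume "P \<in> {P. eventually P at_top}"
  then have "eventually P at_top" by simp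
  then have "\<exists>N. \<forall>x\<ge>N. P x" by (simp only: eventually_at_top_linorder)
  then obtain N where N0: "\<forall>x\<ge>N. P x" by (elim exE)
  have N: "\<And>x. x \<ge> N \<Longrightarrow> P x" using N0 by simp
  define N' where "N' = max N 0"
  have "(INF x\<in>{x. P x}. f x) \<le> (INF s\<in>{s. N' \<le> s}. g s) + (INF t\<in>{t. 0 \<le> t}. h t)"
  proof (rule INF_sum_ge)
    fix s t :: real assume s: "s \<in> {s. N' \<le> s}" and t: "t \<in> {t. 0 \<le> t}"
    have s0: "s \<ge> N" "s \<ge> 0" using s by (simp_all add: N'_def)
    have t0: "t \<ge> 0" using t by simp
    have "P (s + t)" using N s0 t0 by simp
    then have "(INF x\<in>{x. P x}. f x) \<le> f (s + t)" by (intro INF_lower) simp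
    also have "\<dots> \<le> g s + h t" using s0 t0 by (intro H)
    finally show "(INF x\<in>{x. P x}. f x) \<le> g s + h t" .
  qed
  also have "\<dots> \<le> Liminf at_top g + Liminf at_top h"
    by (intro add_mono INF_le_Liminf)
  finally show "(INF x\<in>{x. P x}. f x) \<le> Liminf at_top g + Liminf at_top h" .
qed

lemma peierls_tri:
  fixes U :: "real \<Rightarrow> real"
  assumes dper: "\<And>(m::int) x. deriv U (x + of_int m) = deriv U x"
  shows "peierls U x z \<le> peierls U y z + peierls U x y"
  unfolding peierls_def
proof (rule liminf_tri)
  fix s t :: real assume "s \<ge> 0" "t \<ge> 0"
  then show "(INF \<gamma> \<in> {\<gamma>. abs_cont_on 0 (s+t) \<gamma> \<and> \<gamma> 0 = z \<and> \<gamma> (s+t) - x \<in> \<int>}. action U (s+t) \<gamma>)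
    \<le> (INF \<gamma> \<in> {\<gamma>. abs_cont_on 0 s \<gamma> \<and> \<gamma> 0 = z \<and> \<gamma> s - y \<in> \<int>}. action U s \<gamma>)
     + (INF \<gamma> \<in> {\<gamma>. abs_cont_on 0 t \<gamma> \<and> \<gamma> 0 = y \<and> \<gamma> t - x \<in> \<int>}. action U t \<gamma>)"
    by (rule A_tri[OF _ _ dper])
qed


lemma Ut_int_per:
  fixes Ut :: "real \<Rightarrow> real"
  assumes per: "\<And>x. Ut (x + 1) = Ut x"
  shows "Ut (y + of_int m) = Ut y"
proof (induction m rule: int_induct[where k=0])
  case base then show ?case by simp
next
  case (step1 i)
  have "Ut (y + of_int (i + 1)) = Ut ((y + of_int i) + 1)" by (simp add: add.assoc)
  also have "\<dots> = Ut y" using per step1 by simp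
  finally show ?case .
next
  case (step2 i)
  have e: "y + of_int (i - 1) + 1 = y + of_int i" by simp
  have "Ut (y + of_int (i - 1)) = Ut (y + of_int (i - 1) + 1)" by (rule per[symmetric])
  also have "\<dots> = Ut (y + of_int i)" by (simp only: e)
  also have "\<dots> = Ut y" using step2 by simp
  finally show ?case .
qed

theorem lemma4p4:
  fixes U Ut :: "real \<Rightarrow> real" and b :: real and k :: nat
    and xm xM :: "int \<Rightarrow> real"
  assumes smooth: "smooth_fun Ut"
    and per: "\<And>x. Ut (x + 1) = Ut x"
    and skew: "\<And>x. U x = Ut x - b * x"
    and k: "k \<ge> 1"
    and xM0: "xM 0 = 0" and xMk: "xM (int k) = 1"
    and xm_per: "\<And>i. xm (i + int k) = xm i + 1"
    and xM_per: "\<And>i. xM (i + int k) = xM i + 1"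
    and interleave: "\<And>i. xM (i - 1) < xm i \<and> xm i < xM i"
    and mins: "\<And>i. is_local_min U (xm i)"
    and maxs: "\<And>i. is_local_max U (xM i)"
    and crit: "\<And>y. deriv U y = 0 \<longleftrightarrow> y \<in> range xm \<or> y \<in> range xM"
  shows "Wfun U xm k x =
     Min ((\<lambda>i. min (Wmin U xm k i + peierls U x (xm i))
                    (Wfun U xm k (xM i) + peierls U x (xM i))) ` {1..int k})"
proof -
  have dper: "\<And>(m::int) y. deriv U (y + of_int m) = deriv U y"
  proof -
    fix m :: int and y :: real
    have "U (z + of_int m) = U z + (- b * of_int m)" for z
    proof -
      have "U (z + of_int m) = Ut (z + of_int m) - b * (z + of_int m)" by (rule skew)
      also have "\<dots> = Ut z - b * (z + of_int m)" using Ut_int_per[of Ut, OF per] by simp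
      also have "\<dots> = U z + (- b * of_int m)" using skew[of z] by (simp add: algebra_simps)
      finally show ?thesis .
    qed
    then show "deriv U (y + of_int m) = deriv U y" by (rule deriv_shift_per)
  qed
  define S where "S = {1..int k}"
  have fin: "finite S" and ne: "S \<noteq> {}" using k by (auto simp: S_def)
  define F where "F j = Wmin U xm k j + peierls U x (xm j)" for j
  define G where "G i = min (F i) (Wfun U xm k (xM i) + peierls U x (xM i))" for i
  have L: "Wfun U xm k x = Min (F ` S)" unfolding Wfun_def F_def S_def ..
  have R: "Min ((\<lambda>i. min (Wmin U xm k i + peierls U x (xm i))
                    (Wfun U xm k (xM i) + peierls U x (xM i))) ` {1..int k}) = Min (G ` S)"
    unfolding G_def F_def S_def ..
  have "Min (F ` S) \<in> F ` S" using fin ne by (intro Min_in) auto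
  then obtain j where j: "j \<in> S" "Min (F ` S) = F j" by auto
  have "Min (G ` S) \<in> G ` S" using fin ne by (intro Min_in) auto
  then obtain i where i: "i \<in> S" "Min (G ` S) = G i" by auto
  have le1: "Min (G ` S) \<le> Min (F ` S)"
  proof -
    have "Min (G ` S) \<le> G j" using fin j by (intro Min_le) auto
    also have "\<dots> \<le> F j" unfolding G_def by simp
    finally show ?thesis using j by simp
  qed
  have le2: "Min (F ` S) \<le> Min (G ` S)"
  proof -
    have a: "Min (F ` S) \<le> F i" using fin i by (intro Min_le) auto
    have "Wfun U xm k (xM i) \<in> (\<lambda>j. Wmin U xm k j + peierls U (xM i) (xm j)) ` S"
      unfolding Wfun_def S_def[symmetric] using fin ne by (intro Min_in) auto
    then obtain j' where j': "j' \<in> S" "Wfun U xm k (xM i) = Wmin U xm k j' + peierls U (xM i) (xm j')"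
      by auto
    have "Min (F ` S) \<le> F j'" using fin j' by (intro Min_le) auto
    also have "\<dots> = Wmin U xm k j' + peierls U x (xm j')" unfolding F_def ..
    also have "\<dots> \<le> Wmin U xm k j' + (peierls U (xM i) (xm j') + peierls U x (xM i))"
      by (intro add_left_mono peierls_tri[OF dper])
    also have "\<dots> = Wfun U xm k (xM i) + peierls U x (xM i)" using j' by (simp add: add.assoc)
    finally have b: "Min (F ` S) \<le> Wfun U xm k (xM i) + peierls U x (xM i)" .
    show ?thesis using a b i unfolding G_def by simp
  qed
  show ?thesis unfolding L R using le1 le2 by (rule antisym[rotated])
qed

end
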